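(* Let $A$ be an associative unital $k$-algebra over a commutative ring $k$. Then $A$ is a left Ore domain if and only if $A$ is a monoform left $A$-module. In this case $A$ is a monoform left $B$-module for every subalgebra $B$ with $L(A)\subseteq B\subseteq\mathrm{End}_k(A)$.
   Context: $L(A)=\{L_a: a\in A\}$ where $L_a(x)=ax$; $A$ is a left $B$-module via $\varphi\cdot a=\varphi(a)$. A left Ore domain is a domain $R$ such that $Ra\cap Rb\neq 0$ for all nonzero $a,b\in R$ (equivalently, a domain of left uniform dimension $1$). A module $M$ is monoform if every nonzero homomorphism $f:N\to M$ from a submodule $N\subseteq M$ is injective. *)

theory Defs
  imports Main "HOL.Modules"
begin

text \<open>A is modelled as the whole ring type 'a; the k-algebra structure is a
scalar action smult of a commutative ring type 'k making 'a a k-module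
(HOL's module locale) compatible with multiplication.\<close>

definition k_algebra :: "('k::comm_ring_1 \<Rightarrow> 'a::ring_1 \<Rightarrow> 'a) \<Rightarrow> bool" where
  "k_algebra smult \<longleftrightarrow> module smult \<and>
     (\<forall>c a b. smult c (a * b) = smult c a * b \<and> smult c (a * b) = a * smult c b)"

definition L :: "'a::ring_1 \<Rightarrow> 'a \<Rightarrow> 'a" where
  "L a = (\<lambda>x. a * x)"

definition left_ore_domain :: "'a::ring_1 itself \<Rightarrow> bool" where
  "left_ore_domain (_::'a itself) \<longleftrightarrow>
     (1::'a) \<noteq> 0 \<and> (\<forall>a b::'a. a * b = 0 \<longrightarrow> a = 0 \<or> b = 0) \<and>
     (\<forall>a b::'a. a \<noteq> 0 \<longrightarrow> b \<noteq> 0 \<longrightarrow> (\<exists>r s. r * a = s * b \<and> r * a \<noteq> 0))"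

text \<open>Module structure on 'a given by a set B of operators acting by evaluation
(phi . x = phi x). For B = L(A) this is the left regular A-module.\<close>
definition op_submodule :: "('a::ab_group_add \<Rightarrow> 'a) set \<Rightarrow> 'a set \<Rightarrow> bool" where
  "op_submodule B N \<longleftrightarrow> 0 \<in> N \<and> (\<forall>x\<in>N. \<forall>y\<in>N. x + y \<in> N) \<and> (\<forall>x\<in>N. - x \<in> N)
     \<and> (\<forall>\<phi>\<in>B. \<forall>x\<in>N. \<phi> x \<in> N)"

definition op_hom :: "('a::ab_group_add \<Rightarrow> 'a) set \<Rightarrow> 'a set \<Rightarrow> ('a \<Rightarrow> 'a) \<Rightarrow> bool" where
  "op_hom B N f \<longleftrightarrow> (\<forall>x\<in>N. \<forall>y\<in>N. f (x + y) = f x + f y) \<and>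
     (\<forall>\<phi>\<in>B. \<forall>x\<in>N. f (\<phi> x) = \<phi> (f x))"

definition monoform :: "('a::ab_group_add \<Rightarrow> 'a) set \<Rightarrow> bool" where
  "monoform B \<longleftrightarrow> (\<forall>N f. op_submodule B N \<and> op_hom B N f \<and> (\<exists>x\<in>N. f x \<noteq> 0)
       \<longrightarrow> inj_on f N)"

definition k_linear :: "('k::comm_ring_1 \<Rightarrow> 'a::ab_group_add \<Rightarrow> 'a) \<Rightarrow> ('a \<Rightarrow> 'a) \<Rightarrow> bool" where
  "k_linear smult f \<longleftrightarrow> (\<forall>x y. f (x + y) = f x + f y) \<and> (\<forall>c x. f (smult c x) = smult c (f x))"

definition End_subalgebra :: "('k::comm_ring_1 \<Rightarrow> 'a::ab_group_add \<Rightarrow> 'a) \<Rightarrow> ('a \<Rightarrow> 'a) set \<Rightarrow> bool" where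
  "End_subalgebra smult B \<longleftrightarrow> (\<forall>f\<in>B. k_linear smult f) \<and> id \<in> B \<and> (\<lambda>x. 0) \<in> B \<and>
     (\<forall>f\<in>B. \<forall>g\<in>B. (\<lambda>x. f x + g x) \<in> B \<and> f \<circ> g \<in> B) \<and>
     (\<forall>c. \<forall>f\<in>B. (\<lambda>x. smult c (f x)) \<in> B)"

end

theory Submission
  imports Defs
begin

lemma ore_monoform:
  assumes ore: "left_ore_domain TYPE('a::ring_1)"
    and BL: "range (L :: 'a \<Rightarrow> 'a \<Rightarrow> 'a) \<subseteq> B"
  shows "monoform B"
  unfolding monoform_def
proof (intro allI impI)
  fix N and f :: "'a \<Rightarrow> 'a"
  assume H: "op_submodule B N \<and> op_hom B N f \<and> (\<exists>x\<in>N. f x \<noteq> 0)"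
  have dom: "\<And>a b::'a. a * b = 0 \<Longrightarrow> a = 0 \<or> b = 0"
   and oreP: "\<And>a b::'a. a \<noteq> 0 \<Longrightarrow> b \<noteq> 0 \<Longrightarrow> \<exists>r s. r * a = s * b \<and> r * a \<noteq> 0"
    using ore unfolding left_ore_domain_def by blast+
  have Lin: "\<And>c. L c \<in> B" using BL by auto
  have add: "\<And>x y. x \<in> N \<Longrightarrow> y \<in> N \<Longrightarrow> f (x + y) = f x + f y"
    and comm: "\<And>c x. x \<in> N \<Longrightarrow> f (c * x) = c * f x"
    using H Lin unfolding op_hom_def L_def by (metis)+
  have sub_add: "\<And>x y. x \<in> N \<Longrightarrow> y \<in> N \<Longrightarrow> x + y \<in> N"
    and sub_neg: "\<And>x. x \<in> N \<Longrightarrow> - x \<in> N"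
    and sub_mul: "\<And>c x. x \<in> N \<Longrightarrow> c * x \<in> N"
    using H Lin unfolding op_submodule_def L_def by metis+
  obtain w where w: "w \<in> N" "f w \<noteq> 0" using H by blast
  show "inj_on f N"
  proof (rule inj_onI)
    fix x y assume x: "x \<in> N" and y: "y \<in> N" and fxy: "f x = f y"
    show "x = y"
    proof (rule ccontr)
      assume "x \<noteq> y"
      hence z0: "x - y \<noteq> 0" by simp
      have zN: "x - y \<in> N" using sub_add[OF x sub_neg[OF y]] by simp
      have "f (x - y + y) = f (x - y) + f y" using add[OF zN y] .
      hence fz: "f (x - y) = 0" using fxy by simp
      have w0: "w \<noteq> 0" using w comm[OF w(1), of 0] by auto
      obtain r s where rs: "r * (x - y) = s * w" "r * (x - y) \<noteq> 0"
        using oreP[OF z0 w0] by blast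
      have "s * f w = 0" using comm[OF zN, of r] comm[OF w(1), of s] fz rs(1) by simp
      hence "s = 0" using dom w(2) by blast
      thus False using rs by simp
    qed
  qed
qed

lemma monoform_ore:
  assumes M: "monoform (range (L :: 'a::ring_1 \<Rightarrow> 'a \<Rightarrow> 'a))"
  shows "left_ore_domain TYPE('a)"
proof -
  have Mi: "\<And>N f. op_submodule (range L) N \<Longrightarrow> op_hom (range L) N f \<Longrightarrow> (\<exists>x\<in>N. f x \<noteq> 0)
       \<Longrightarrow> inj_on (f::'a\<Rightarrow>'a) N"
    using M unfolding monoform_def by blast
  have dom: "\<forall>a b::'a. a * b = 0 \<longrightarrow> a = 0 \<or> b = 0"
  proof (intro allI impI, rule ccontr)
    fix a b :: 'a assume ab: "a * b = 0" and nz: "\<not> (a = 0 \<or> b = 0)"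
    have "inj_on (\<lambda>x. x * b) UNIV"
      apply (rule Mi)
      unfolding op_submodule_def op_hom_def L_def
      using nz by (auto simp: algebra_simps intro: exI[of _ 1])
    hence "a = 0" using ab by (metis UNIV_I inj_onD mult_zero_left)
    thus False using nz by simp
  qed
  have ore: "\<forall>a b::'a. a \<noteq> 0 \<longrightarrow> b \<noteq> 0 \<longrightarrow> (\<exists>r s. r * a = s * b \<and> r * a \<noteq> 0)"
  proof (intro allI impI, rule ccontr)
    fix a b :: 'a assume a0: "a \<noteq> 0" and b0: "b \<noteq> 0"
      and no: "\<not> (\<exists>r s. r * a = s * b \<and> r * a \<noteq> 0)"
    define N where "N = {r * a + s * b | r s. True}"
    define f where "f x = (SOME y. \<exists>r s. x = r * a + s * b \<and> y = r * a)" for x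
    have uniq: "r * a = r' * a" if "r * a + s * b = r' * a + s' * b" for r s r' s'
    proof -
      have "(r - r') * a = (s' - s) * b" using that by (simp add: algebra_simps)
      hence "(r - r') * a = 0" using no by blast
      thus ?thesis by (simp add: algebra_simps)
    qed
    have fe: "f (r * a + s * b) = r * a" for r s
    proof -
      have "\<exists>r' s'. r * a + s * b = r' * a + s' * b \<and> f (r * a + s * b) = r' * a"
        unfolding f_def by (rule someI_ex) blast
      thus ?thesis using uniq by metis
    qed
    have sub: "op_submodule (range L) N"
      unfolding op_submodule_def N_def L_def
    proof (intro conjI ballI)
      show "0 \<in> {r * a + s * b |r s. True}" by (rule CollectI, rule exI[of _ 0], rule exI[of _ 0]) simp
    next
      fix x y assume "x \<in> {r * a + s * b |r s. True}" "y \<in> {r * a + s * b |r s. True}"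
      then obtain r s r' s' where "x = r * a + s * b" "y = r' * a + s' * b" by blast
      thus "x + y \<in> {r * a + s * b |r s. True}"
        by (intro CollectI exI[of _ "r + r'"] exI[of _ "s + s'"]) (simp add: algebra_simps)
    next
      fix x assume "x \<in> {r * a + s * b |r s. True}"
      then obtain r s where "x = r * a + s * b" by blast
      thus "- x \<in> {r * a + s * b |r s. True}"
        by (intro CollectI exI[of _ "- r"] exI[of _ "- s"]) (simp add: algebra_simps)
    next
      fix \<phi> :: "'a \<Rightarrow> 'a" and x assume "\<phi> \<in> range (\<lambda>a x. a * x)" "x \<in> {r * a + s * b |r s. True}"
      then obtain c r s where "\<phi> = (\<lambda>x. c * x)" "x = r * a + s * b" by blast
      thus "\<phi> x \<in> {r * a + s * b |r s. True}"
        by (intro CollectI exI[of _ "c * r"] exI[of _ "c * s"]) (simp add: algebra_simps)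
    qed
    have hom: "op_hom (range L) N f"
      unfolding op_hom_def N_def L_def
    proof (intro conjI ballI)
      fix x y assume "x \<in> {r * a + s * b |r s. True}" "y \<in> {r * a + s * b |r s. True}"
      then obtain r s r' s' where e: "x = r * a + s * b" "y = r' * a + s' * b" by blast
      have "x + y = (r + r') * a + (s + s') * b" using e by (simp add: algebra_simps)
      hence "f (x + y) = (r + r') * a" using fe by simp
      thus "f (x + y) = f x + f y" using e fe by (simp add: algebra_simps)
    next
      fix \<phi> :: "'a \<Rightarrow> 'a" and x assume "\<phi> \<in> range (\<lambda>a x. a * x)" "x \<in> {r * a + s * b |r s. True}"
      then obtain c r s where e: "\<phi> = (\<lambda>x. c * x)" "x = r * a + s * b" by blast
      have "c * x = (c * r) * a + (c * s) * b" using e by (simp add: algebra_simps)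
      hence "f (c * x) = (c * r) * a" using fe by simp
      thus "f (\<phi> x) = \<phi> (f x)" using e fe by (simp add: algebra_simps)
    qed
    have aN: "a \<in> N" unfolding N_def by (intro CollectI exI[of _ 1] exI[of _ 0]) simp
    have bN: "b \<in> N" unfolding N_def by (intro CollectI exI[of _ 0] exI[of _ 1]) simp
    have 0: "0 \<in> N" unfolding N_def by (intro CollectI exI[of _ 0] exI[of _ 0]) simp
    have fa: "f a = a" using fe[of 1 0] by simp
    have fb: "f b = 0" using fe[of 0 1] by simp
    have f0: "f 0 = 0" using fe[of 0 0] by simp
    have "inj_on f N" by (rule Mi[OF sub hom], rule bexI[OF _ aN]) (simp add: fa a0)
    hence "b = 0" using inj_onD[OF _ _ bN 0] fb f0 by metis
    thus False using b0 by simp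
  qed
  show ?thesis unfolding left_ore_domain_def using dom ore by simp
qed

theorem lemma2p3:
  fixes smult :: "'k::comm_ring_1 \<Rightarrow> 'a::ring_1 \<Rightarrow> 'a"
  assumes "k_algebra smult"
  shows "(left_ore_domain TYPE('a) \<longleftrightarrow> monoform (range (L :: 'a \<Rightarrow> 'a \<Rightarrow> 'a))) \<and>
         (left_ore_domain TYPE('a) \<longrightarrow>
            (\<forall>B. End_subalgebra smult B \<and> range L \<subseteq> B \<longrightarrow> monoform B))"
  using ore_monoform monoform_ore by blast

end
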